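(* Let $k$ be a kernel on $\mathcal{X}$, $\sigma>0$, $f\in\mathcal{H}_k$, $g\in\mathcal{H}_{\sigma^2\delta}$, $h=f+g\in\mathcal{H}_{k^\sigma}$. Let $x_1,\dots,x_t\in\mathcal{X}$ be pairwise distinct with observations $y_i=h(x_i)$. Then for every $x\in\mathcal{X}\setminus\{x_1,\dots,x_t\}$, $$|\widehat m_t(x)-f(x)|\le\|h\|_{\mathcal{H}_{k^\sigma}}\widehat\sigma_t(x)+\big(\|h\|_{\mathcal{H}_{k^\sigma}}+\|g\|_{\mathcal{H}_{\sigma^2\delta}}\big)\sigma.$$
   Context: $\delta(x,y)=1$ if $x=y$, else $0$; $k^\sigma=k+\sigma^2\delta$; $\mathcal{H}_{\sigma^2\delta}$ is the RKHS of $\sigma^2\delta$. $\mathbf{k}_t(x)=[k(x,x_i)]_{i\le t}$, $\mathbf{K}_t=[k(x_i,x_j)]_{i,j\le t}$, $\mathbf{y}_t=[y_i]_{i\le t}$, $\widehat m_t(x)=\mathbf{k}_t(x)^T(\mathbf{K}_t+\sigma^2I)^{-1}\mathbf{y}_t$, $\widehat\sigma_t^2(x)=k(x,x)-\mathbf{k}_t(x)^T(\mathbf{K}_t+\sigma^2I)^{-1}\mathbf{k}_t(x)$. *)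

theory Defs
  imports "HOL-Analysis.Analysis"
begin

definition delta :: "'a \<Rightarrow> 'a \<Rightarrow> real" where
  "delta x y = (if x = y then 1 else 0)"

definition is_kernel :: "('a \<Rightarrow> 'a \<Rightarrow> real) \<Rightarrow> bool" where
  "is_kernel k \<longleftrightarrow> (\<forall>x y. k x y = k y x) \<and>
     (\<forall>(xs :: 'a list) (cs :: real list). length cs = length xs \<longrightarrow>
        (\<Sum>i<length xs. \<Sum>j<length xs. cs!i * cs!j * k (xs!i) (xs!j)) \<ge> 0)"

definition is_RKHS :: "('a \<Rightarrow> 'a \<Rightarrow> real) \<Rightarrow> ('a \<Rightarrow> real) set
      \<Rightarrow> (('a \<Rightarrow> real) \<Rightarrow> ('a \<Rightarrow> real) \<Rightarrow> real) \<Rightarrow> bool" where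
  "is_RKHS k H ip \<longleftrightarrow>
     (\<lambda>_. 0) \<in> H \<and>
     (\<forall>f\<in>H. \<forall>g\<in>H. (\<lambda>z. f z + g z) \<in> H) \<and>
     (\<forall>f\<in>H. \<forall>c::real. (\<lambda>z. c * f z) \<in> H) \<and>
     (\<forall>f\<in>H. \<forall>g\<in>H. ip f g = ip g f) \<and>
     (\<forall>f\<in>H. \<forall>g\<in>H. \<forall>u\<in>H. ip (\<lambda>z. f z + g z) u = ip f u + ip g u) \<and>
     (\<forall>f\<in>H. \<forall>g\<in>H. \<forall>c::real. ip (\<lambda>z. c * f z) g = c * ip f g) \<and>
     (\<forall>f\<in>H. ip f f \<ge> 0) \<and>
     (\<forall>f\<in>H. ip f f = 0 \<longrightarrow> f = (\<lambda>_. 0)) \<and>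
     (\<forall>F :: nat \<Rightarrow> ('a \<Rightarrow> real). (\<forall>n. F n \<in> H) \<longrightarrow>
        (\<forall>e>0. \<exists>N. \<forall>m\<ge>N. \<forall>n\<ge>N. ip (\<lambda>z. F m z - F n z) (\<lambda>z. F m z - F n z) < e) \<longrightarrow>
        (\<exists>L\<in>H. (\<lambda>n. ip (\<lambda>z. F n z - L z) (\<lambda>z. F n z - L z)) \<longlonglongrightarrow> 0)) \<and>
     (\<forall>x. (\<lambda>y. k y x) \<in> H) \<and>
     (\<forall>f\<in>H. \<forall>x. ip f (\<lambda>y. k y x) = f x)"

definition rkhs_norm :: "(('a \<Rightarrow> real) \<Rightarrow> ('a \<Rightarrow> real) \<Rightarrow> real) \<Rightarrow> ('a \<Rightarrow> real) \<Rightarrow> real" where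
  "rkhs_norm ip f = sqrt (ip f f)"

definition kvec :: "('a \<Rightarrow> 'a \<Rightarrow> real) \<Rightarrow> ('n::finite \<Rightarrow> 'a) \<Rightarrow> 'a \<Rightarrow> real^'n" where
  "kvec k xs x = (\<chi> i. k x (xs i))"

definition Kmat :: "('a \<Rightarrow> 'a \<Rightarrow> real) \<Rightarrow> ('n::finite \<Rightarrow> 'a) \<Rightarrow> real^'n^'n" where
  "Kmat k xs = (\<chi> i j. k (xs i) (xs j))"

definition post_mean :: "('a \<Rightarrow> 'a \<Rightarrow> real) \<Rightarrow> real \<Rightarrow> ('n::finite \<Rightarrow> 'a) \<Rightarrow> real^'n \<Rightarrow> 'a \<Rightarrow> real" where
  "post_mean k \<sigma> xs y x =
     kvec k xs x \<bullet> (matrix_inv (Kmat k xs + \<sigma>\<^sup>2 *\<^sub>R mat 1) *v y)"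

definition post_var :: "('a \<Rightarrow> 'a \<Rightarrow> real) \<Rightarrow> real \<Rightarrow> ('n::finite \<Rightarrow> 'a) \<Rightarrow> 'a \<Rightarrow> real" where
  "post_var k \<sigma> xs x =
     k x x - kvec k xs x \<bullet> (matrix_inv (Kmat k xs + \<sigma>\<^sup>2 *\<^sub>R mat 1) *v kvec k xs x)"

end

theory Submission
  imports Defs
begin

lemma rk_facts:
  assumes "is_RKHS K H ip"
  shows "(\<lambda>_. 0) \<in> H"
    "\<And>f g. f\<in>H \<Longrightarrow> g\<in>H \<Longrightarrow> (\<lambda>z. f z + g z) \<in> H"
    "\<And>f c. f\<in>H \<Longrightarrow> (\<lambda>z. c * f z) \<in> H"
    "\<And>f g. f\<in>H \<Longrightarrow> g\<in>H \<Longrightarrow> ip f g = ip g f"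
    "\<And>f g u. f\<in>H \<Longrightarrow> g\<in>H \<Longrightarrow> u\<in>H \<Longrightarrow> ip (\<lambda>z. f z + g z) u = ip f u + ip g u"
    "\<And>f g c. f\<in>H \<Longrightarrow> g\<in>H \<Longrightarrow> ip (\<lambda>z. c * f z) g = c * ip f g"
    "\<And>f. f\<in>H \<Longrightarrow> ip f f \<ge> 0"
    "\<And>x. (\<lambda>y. K y x) \<in> H"
    "\<And>f x. f\<in>H \<Longrightarrow> ip f (\<lambda>y. K y x) = f x"
  using assms unfolding is_RKHS_def by blast+

lemma lc_mem:
  assumes R: "is_RKHS K H ip" and "finite S"
  shows "(\<lambda>z. \<Sum>i\<in>S. c i * K z (p i)) \<in> H"
  using assms(2)
proof (induction S rule: finite_induct)
  case empty
  then show ?case using rk_facts(1)[OF R] by simp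
next
  case (insert a S)
  have "(\<lambda>z. c a * K z (p a)) \<in> H" using rk_facts(3)[OF R rk_facts(8)[OF R]] .
  from rk_facts(2)[OF R this insert.IH] show ?case using insert by simp
qed

lemma lc_ip:
  assumes R: "is_RKHS K H ip" and "finite S" and w: "w \<in> H"
  shows "ip (\<lambda>z. \<Sum>i\<in>S. c i * K z (p i)) w = (\<Sum>i\<in>S. c i * w (p i))"
  using assms(2)
proof (induction S rule: finite_induct)
  case empty
  have "ip (\<lambda>z. 0 * w z) w = 0 * ip w w" using rk_facts(6)[OF R w w] .
  then show ?case by simp
next
  case (insert a S)
  have m1: "(\<lambda>z. c a * K z (p a)) \<in> H" using rk_facts(3)[OF R rk_facts(8)[OF R]] .
  have m2: "(\<lambda>z. \<Sum>i\<in>S. c i * K z (p i)) \<in> H" using lc_mem[OF R insert(1)] .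
  have "ip (\<lambda>z. \<Sum>i\<in>insert a S. c i * K z (p i)) w
      = ip (\<lambda>z. c a * K z (p a) + (\<Sum>i\<in>S. c i * K z (p i))) w" using insert by simp
  also have "\<dots> = ip (\<lambda>z. c a * K z (p a)) w + ip (\<lambda>z. \<Sum>i\<in>S. c i * K z (p i)) w"
    using rk_facts(5)[OF R m1 m2 w] .
  also have "ip (\<lambda>z. c a * K z (p a)) w = c a * w (p a)"
    using rk_facts(6)[OF R rk_facts(8)[OF R] w, of "c a"] rk_facts(4)[OF R rk_facts(8)[OF R] w]
      rk_facts(9)[OF R w] by simp
  finally show ?case using insert by simp
qed

lemma rk_cs:
  assumes R: "is_RKHS K H ip" and f: "f \<in> H" and g: "g \<in> H"
  shows "\<bar>ip f g\<bar> \<le> sqrt (ip f f) * sqrt (ip g g)"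
proof -
  define A where "A = ip f f"
  define B where "B = ip g g"
  define C where "C = ip f g"
  have q: "0 \<le> a*a*A + 2*a*b*C + b*b*B" for a b
  proof -
    have u: "(\<lambda>z. a * f z) \<in> H" and w: "(\<lambda>z. b * g z) \<in> H"
      using rk_facts(3)[OF R f] rk_facts(3)[OF R g] by auto
    have s: "(\<lambda>z. a * f z + b * g z) \<in> H" using rk_facts(2)[OF R u w] .
    have "0 \<le> ip (\<lambda>z. a * f z + b * g z) (\<lambda>z. a * f z + b * g z)" using rk_facts(7)[OF R s] .
    also have "\<dots> = a * ip f (\<lambda>z. a * f z + b * g z) + b * ip g (\<lambda>z. a * f z + b * g z)"
      using rk_facts(5)[OF R u w s] rk_facts(6)[OF R f s] rk_facts(6)[OF R g s] by simp
    also have "ip f (\<lambda>z. a * f z + b * g z) = a * A + b * C"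
      using rk_facts(4)[OF R f s] rk_facts(5)[OF R u w f] rk_facts(6)[OF R f f] rk_facts(6)[OF R g f]
        rk_facts(4)[OF R f g] unfolding A_def C_def by simp
    also have "ip g (\<lambda>z. a * f z + b * g z) = a * C + b * B"
      using rk_facts(4)[OF R g s] rk_facts(5)[OF R u w g] rk_facts(6)[OF R f g] rk_facts(6)[OF R g g]
      unfolding B_def C_def by simp
    finally show ?thesis by (simp add: algebra_simps)
  qed
  have A0: "A \<ge> 0" "B \<ge> 0" using rk_facts(7)[OF R f] rk_facts(7)[OF R g] A_def B_def by auto
  have "C*C \<le> A*B"
  proof (cases "B = 0")
    case True
    have "C = 0"
    proof (rule ccontr)
      assume "C \<noteq> 0"
      have "0 \<le> 1*1*A + 2*1*(-(A+1)/(2*C))*C + (-(A+1)/(2*C))*(-(A+1)/(2*C))*B" using q .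
      with True \<open>C \<noteq> 0\<close> show False by (simp add: field_simps)
    qed
    then show ?thesis using True by simp
  next
    case False
    have "0 \<le> B*B*A + 2*B*(-C)*C + (-C)*(-C)*B" using q .
    hence "0 \<le> B * (A*B - C*C)" by (simp add: algebra_simps)
    with False A0 show ?thesis by (simp add: zero_le_mult_iff)
  qed
  hence "sqrt (C*C) \<le> sqrt (A*B)" using real_sqrt_le_mono by blast
  hence "\<bar>C\<bar> \<le> sqrt (A*B)" by (metis real_sqrt_abs2)
  thus ?thesis unfolding A_def B_def C_def by (simp add: real_sqrt_mult)
qed

lemma slc_mem:
  assumes R: "is_RKHS K H ip" and "finite S"
  shows "(\<lambda>z. K z x + (\<Sum>i\<in>S. c i * K z (p i))) \<in> H"
  using rk_facts(2)[OF R rk_facts(8)[OF R] lc_mem[OF R assms(2)]] .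

lemma slc_ip:
  assumes R: "is_RKHS K H ip" and "finite S" and w: "w \<in> H"
  shows "ip (\<lambda>z. K z x + (\<Sum>i\<in>S. c i * K z (p i))) w = w x + (\<Sum>i\<in>S. c i * w (p i))"
proof -
  have "ip (\<lambda>z. K z x + (\<Sum>i\<in>S. c i * K z (p i))) w = ip (\<lambda>z. K z x) w + ip (\<lambda>z. \<Sum>i\<in>S. c i * K z (p i)) w"
    using rk_facts(5)[OF R rk_facts(8)[OF R] lc_mem[OF R assms(2)] w] .
  also have "ip (\<lambda>z. K z x) w = w x"
    using rk_facts(4)[OF R rk_facts(8)[OF R] w] rk_facts(9)[OF R w] by simp
  finally show ?thesis using lc_ip[OF R assms(2) w] by simp
qed

theorem mainTheorem15:
  fixes k :: "'a \<Rightarrow> 'a \<Rightarrow> real" and \<sigma> :: real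
    and Hk Hd Hs :: "('a \<Rightarrow> real) set"
    and ipk ipd ips :: "('a \<Rightarrow> real) \<Rightarrow> ('a \<Rightarrow> real) \<Rightarrow> real"
    and f g h :: "'a \<Rightarrow> real"
    and xs :: "'n::finite \<Rightarrow> 'a" and x :: 'a
  assumes "is_kernel k" and "\<sigma> > 0"
    and "is_RKHS k Hk ipk"
    and "is_RKHS (\<lambda>u v. \<sigma>\<^sup>2 * delta u v) Hd ipd"
    and "is_RKHS (\<lambda>u v. k u v + \<sigma>\<^sup>2 * delta u v) Hs ips"
    and "f \<in> Hk" and "g \<in> Hd" and "h = (\<lambda>z. f z + g z)" and "h \<in> Hs"
    and "inj xs"
    and "x \<notin> range xs"
  shows "\<bar>post_mean k \<sigma> xs (\<chi> i. h (xs i)) x - f x\<bar>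
           \<le> rkhs_norm ips h * sqrt (post_var k \<sigma> xs x)
             + (rkhs_norm ips h + rkhs_norm ipd g) * \<sigma>"
proof -
  note Rk = assms(3) and Rd = assms(4) and Rs = assms(5)
  have ksym: "k u v = k v u" for u v using assms(1) unfolding is_kernel_def by blast
  have dxi: "delta x (xs i) = 0" "delta (xs i) x = 0" for i using assms(11) unfolding delta_def by auto
  have dij: "delta (xs i) (xs j) = (if i = j then 1 else 0)" for i j
    using assms(10) unfolding delta_def inj_def by auto
  define M where "M = Kmat k xs + \<sigma>\<^sup>2 *\<^sub>R mat 1"
  define kv where "kv = kvec k xs x"
  define y where "y = (\<chi> i. h (xs i))"
  have Mij: "M $ i $ j = k (xs i) (xs j) + \<sigma>\<^sup>2 * (if i = j then 1 else 0)" for i j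
    unfolding M_def Kmat_def by (simp add: mat_def)
  have Mv: "(M *v v) $ i = (\<Sum>j\<in>UNIV. k (xs i) (xs j) * v $ j) + \<sigma>\<^sup>2 * v $ i" for v i
  proof -
    have "(M *v v) $ i = (\<Sum>j\<in>UNIV. k (xs i) (xs j) * v $ j + \<sigma>\<^sup>2 * (if i = j then v $ j else 0))"
      unfolding matrix_vector_mult_def Mij vec_lambda_beta by (intro sum.cong) (auto simp: algebra_simps)
    also have "\<dots> = (\<Sum>j\<in>UNIV. k (xs i) (xs j) * v $ j) + \<sigma>\<^sup>2 * v $ i"
      by (simp only: sum.distrib sum_distrib_left[symmetric] sum.delta sum.delta' finite UNIV_I if_True)
    finally show ?thesis .
  qed
  have quad: "0 \<le> (\<Sum>i\<in>UNIV. v $ i * (\<Sum>j\<in>UNIV. k (xs i) (xs j) * v $ j))" for v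
  proof -
    have s: "(\<lambda>z. \<Sum>j\<in>UNIV. v $ j * k z (xs j)) \<in> Hk" using lc_mem[OF Rk finite, of "\<lambda>j. v $ j" xs] by simp
    have "0 \<le> ipk (\<lambda>z. \<Sum>j\<in>UNIV. v $ j * k z (xs j)) (\<lambda>z. \<Sum>j\<in>UNIV. v $ j * k z (xs j))"
      using rk_facts(7)[OF Rk s] .
    also have "\<dots> = (\<Sum>i\<in>UNIV. v $ i * (\<Sum>j\<in>UNIV. v $ j * k (xs i) (xs j)))"
      using lc_ip[OF Rk finite s, of "\<lambda>j. v $ j" xs] by simp
    finally show ?thesis by (simp add: mult.commute)
  qed
  have inv: "invertible M"
    unfolding invertible_left_inverse matrix_left_invertible_ker
  proof (intro allI impI)
    fix v assume "M *v v = 0"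
    hence "0 = (\<Sum>i\<in>UNIV. v $ i * (M *v v) $ i)" by simp
    also have "\<dots> = (\<Sum>i\<in>UNIV. v $ i * (\<Sum>j\<in>UNIV. k (xs i) (xs j) * v $ j)) + \<sigma>\<^sup>2 * (\<Sum>i\<in>UNIV. v $ i * v $ i)"
      unfolding Mv by (simp add: algebra_simps sum.distrib sum_distrib_left)
    finally have "\<sigma>\<^sup>2 * (\<Sum>i\<in>UNIV. v $ i * v $ i) \<le> 0" using quad[of v] by linarith
    hence "(\<Sum>i\<in>UNIV. v $ i * v $ i) \<le> 0" using assms(2) by (simp add: mult_le_0_iff)
    hence "v \<bullet> v \<le> 0" by (simp add: inner_vec_def)
    thus "v = 0" by (metis antisym inner_eq_zero_iff inner_ge_zero)
  qed
  define Mi where "Mi = matrix_inv M"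
  have Mi: "M ** Mi = mat 1" "Mi ** M = mat 1"
    using inv unfolding invertible_def Mi_def matrix_inv_def by (metis (mono_tags, lifting) someI_ex)+
  define a where "a = Mi *v kv"
  have Ma: "M *v a = kv" unfolding a_def matrix_vector_mul_assoc Mi by simp
  have Mt: "transpose M = M" unfolding transpose_def vec_eq_iff
    by (simp add: Mij ksym eq_commute)
  have pm: "post_mean k \<sigma> xs y x = a \<bullet> y"
  proof -
    have "post_mean k \<sigma> xs y x = (M *v a) \<bullet> (Mi *v y)"
      unfolding post_mean_def Ma by (simp add: kv_def M_def Mi_def)
    also have "M *v a = a v* M" using transpose_matrix_vector[of M a] Mt by simp
    also have "(a v* M) \<bullet> (Mi *v y) = a \<bullet> y"
      by (simp add: dot_lmul_matrix matrix_vector_mul_assoc Mi)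
    finally show ?thesis .
  qed
  have pv: "post_var k \<sigma> xs x = k x x - kv \<bullet> a"
    unfolding post_var_def by (simp add: kv_def M_def Mi_def a_def)
  have kvi: "kv $ i = k x (xs i)" for i unfolding kv_def kvec_def by simp
  have kva: "kv \<bullet> a = (\<Sum>i\<in>UNIV. a $ i * k x (xs i))"
    by (simp add: inner_vec_def kvi mult.commute)
  (* the error function in Hs *)
  define ks where "ks = (\<lambda>u v. k u v + \<sigma>\<^sup>2 * delta u v)"
  define e where "e = (\<lambda>z. ks z x + (\<Sum>i\<in>UNIV. (- a $ i) * ks z (xs i)))"
  have Rs': "is_RKHS ks Hs ips" using Rs unfolding ks_def .
  have eH: "e \<in> Hs" unfolding e_def by (rule slc_mem[OF Rs' finite])
  have eip: "ips e w = w x + (\<Sum>i\<in>UNIV. (- a $ i) * w (xs i))" if "w \<in> Hs" for w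
    unfolding e_def by (rule slc_ip[OF Rs' finite that])
  have exj: "e (xs j) = 0" for j
  proof -
    have "e (xs j) = k (xs j) x - ((\<Sum>i\<in>UNIV. k (xs j) (xs i) * a $ i) + \<sigma>\<^sup>2 * a $ j)"
    proof -
      have "(\<Sum>i\<in>UNIV. (- a $ i) * ks (xs j) (xs i)) = - (\<Sum>i\<in>UNIV. k (xs j) (xs i) * a $ i + \<sigma>\<^sup>2 * (if j = i then a $ i else 0))"
        unfolding ks_def dij sum_negf[symmetric] by (intro sum.cong) (auto simp: algebra_simps)
      also have "\<dots> = - ((\<Sum>i\<in>UNIV. k (xs j) (xs i) * a $ i) + \<sigma>\<^sup>2 * a $ j)"
        by (simp only: sum.distrib sum_distrib_left[symmetric] sum.delta sum.delta' finite UNIV_I if_True)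
      finally show ?thesis unfolding e_def by (simp add: ks_def dxi)
    qed
    also have "(\<Sum>i\<in>UNIV. k (xs j) (xs i) * a $ i) + \<sigma>\<^sup>2 * a $ j = kv $ j"
      using Mv[of a j] Ma by simp
    finally show ?thesis by (simp add: kvi ksym)
  qed
  have ex: "e x = k x x + \<sigma>\<^sup>2 - kv \<bullet> a"
    unfolding e_def ks_def kva using dxi(1) by (simp add: sum_negf algebra_simps delta_def[of x x])
  have eee: "ips e e = post_var k \<sigma> xs x + \<sigma>\<^sup>2"
    using eip[OF eH] by (simp add: exj ex pv)
  have ehe: "ips h e = h x - a \<bullet> y"
    using rk_facts(4)[OF Rs' assms(9) eH] eip[OF assms(9)]
    by (simp add: y_def inner_vec_def sum_negf mult.commute)
  define ek where "ek = (\<lambda>z. k z x + (\<Sum>i\<in>UNIV. (- a $ i) * k z (xs i)))"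
  have ekH: "ek \<in> Hk" unfolding ek_def by (rule slc_mem[OF Rk finite])
  have ekj: "ek (xs j) = \<sigma>\<^sup>2 * a $ j" for j
  proof -
    have "ek (xs j) = k (xs j) x - (\<Sum>i\<in>UNIV. k (xs j) (xs i) * a $ i)"
      unfolding ek_def by (simp add: algebra_simps sum_negf)
    also have "(\<Sum>i\<in>UNIV. k (xs j) (xs i) * a $ i) = kv $ j - \<sigma>\<^sup>2 * a $ j"
      using Mv[of a j] Ma by simp
    finally show ?thesis by (simp add: kvi ksym)
  qed
  have ekx: "ek x = k x x - kv \<bullet> a"
    unfolding ek_def kva by (simp add: sum_negf algebra_simps)
  have "0 \<le> ipk ek ek" using rk_facts(7)[OF Rk ekH] .
  also have "ipk ek ek = k x x - kv \<bullet> a - \<sigma>\<^sup>2 * (\<Sum>i\<in>UNIV. a $ i * a $ i)"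
  proof -
    have "ipk ek ek = ek x + (\<Sum>i\<in>UNIV. (- a $ i) * ek (xs i))"
      unfolding ek_def[of] by (rule slc_ip[OF Rk finite ekH[unfolded ek_def]])
    also have "\<dots> = k x x - kv \<bullet> a - \<sigma>\<^sup>2 * (\<Sum>i\<in>UNIV. a $ i * a $ i)"
      unfolding ekj ekx by (simp add: sum_negf sum_distrib_left algebra_simps)
    finally show ?thesis .
  qed
  finally have q0: "0 \<le> k x x - kv \<bullet> a - \<sigma>\<^sup>2 * (\<Sum>i\<in>UNIV. a $ i * a $ i)" .
  have "0 \<le> (\<Sum>i\<in>UNIV. a $ i * a $ i)" by (intro sum_nonneg) simp
  hence "0 \<le> \<sigma>\<^sup>2 * (\<Sum>i\<in>UNIV. a $ i * a $ i)" by simp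
  hence pv0: "0 \<le> post_var k \<sigma> xs x" using q0 unfolding pv by linarith
  have hb: "\<bar>h x - a \<bullet> y\<bar> \<le> rkhs_norm ips h * (sqrt (post_var k \<sigma> xs x) + \<sigma>)"
  proof -
    have "\<bar>h x - a \<bullet> y\<bar> \<le> sqrt (ips h h) * sqrt (ips e e)"
      using rk_cs[OF Rs' assms(9) eH] ehe by simp
    also have "sqrt (ips e e) \<le> sqrt (post_var k \<sigma> xs x) + \<sigma>"
      unfolding eee using sqrt_add_le_add_sqrt[OF pv0, of "\<sigma>\<^sup>2"] assms(2) by simp
    finally show ?thesis unfolding rkhs_norm_def
      by (meson mult_left_mono order_trans real_sqrt_ge_zero rk_facts(7)[OF Rs' assms(9)]
          \<open>sqrt (ips e e) \<le> _\<close> \<open>\<bar>h x - a \<bullet> y\<bar> \<le> _\<close>)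
  qed
  have gb: "\<bar>g x\<bar> \<le> rkhs_norm ipd g * \<sigma>"
  proof -
    have dH: "(\<lambda>u. \<sigma>\<^sup>2 * delta u x) \<in> Hd" using rk_facts(8)[OF Rd] .
    have "g x = ipd g (\<lambda>u. \<sigma>\<^sup>2 * delta u x)" using rk_facts(9)[OF Rd assms(7)] by simp
    also have "\<bar>\<dots>\<bar> \<le> sqrt (ipd g g) * sqrt (ipd (\<lambda>u. \<sigma>\<^sup>2 * delta u x) (\<lambda>u. \<sigma>\<^sup>2 * delta u x))"
      using rk_cs[OF Rd assms(7) dH] .
    also have "ipd (\<lambda>u. \<sigma>\<^sup>2 * delta u x) (\<lambda>u. \<sigma>\<^sup>2 * delta u x) = \<sigma>\<^sup>2"
      using rk_facts(9)[OF Rd dH] by (simp add: delta_def)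
    finally show ?thesis unfolding rkhs_norm_def using assms(2) by simp
  qed
  have "post_mean k \<sigma> xs (\<chi> i. h (xs i)) x - f x = -(h x - a \<bullet> y) + g x"
    using pm assms(8) unfolding y_def by simp
  hence "\<bar>post_mean k \<sigma> xs (\<chi> i. h (xs i)) x - f x\<bar> \<le> \<bar>h x - a \<bullet> y\<bar> + \<bar>g x\<bar>" by simp
  also have "\<dots> \<le> rkhs_norm ips h * (sqrt (post_var k \<sigma> xs x) + \<sigma>) + rkhs_norm ipd g * \<sigma>"
    using hb gb by linarith
  finally show ?thesis by (simp add: algebra_simps)
qed

end
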